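(* Let $(K,\delta)$ be a differential field and let $L_1,\ldots,L_k$ be nonzero elements of $K[\partial;\delta]$ of orders $r_1,\ldots,r_k$. Let $n\ge \operatorname{ord}(\mathrm{LCLM}(L_1,\ldots,L_k))$, and let $M_n$ be the block matrix with $k+1$ block rows and $k$ block columns whose $i$-th block row ($1\le i\le k$) has $S_n(L_i)$ in block column $i$ and zeros elsewhere, and whose last block row is $(S_n(-1),S_n(-1),\ldots,S_n(-1))$. Then: (i) If $L$ is a common left multiple of $L_1,\ldots,L_k$ with $\operatorname{ord}(L)\le n$ and $L=Q_1L_1=\cdots=Q_kL_k$, then the vector $(\phi_{n-r_1}(Q_1),\ldots,\phi_{n-r_k}(Q_k),\phi_n(L))$ belongs to the left kernel of $M_n$. (ii) If $(u_1,\ldots,u_k,u)$ is a nonzero vector in the left kernel of $M_n$, with $u_i\in K^{n+1-r_i}$ for $i=1,\ldots,k$ and $u\in K^{n+1}$, then $u$ is nonzero and $\phi_n^{-1}(u)$ is a common left multiple of $L_1,\ldots,L_k$ with respective left cofactors $\phi_{n-r_1}^{-1}(u_1),\ldots,\phi_{n-r_k}^{-1}(u_k)$, i.e. $\phi_n^{-1}(u)=\phi_{n-r_i}^{-1}(u_i)L_i$ for all $i$. (iii) If $\rho$ is the rank of $M_n$, then $\operatorname{ord}(\mathrm{LCLM}(L_1,\ldots,L_k))=\rho+\sum_{i=1}^k r_i-k(n+1)$.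
   Context: $(K,\delta)$ is a field with an additive map $\delta$ satisfying $\delta(ab)=a\delta(b)+\delta(a)b$. $K[\partial;\delta]$ is the ring of linear differential operators $\sum a_i\partial^i$, $a_i\in K$, with $\partial a=a\partial+\delta(a)$; the order of a nonzero operator is its degree in $\partial$. A common left multiple of nonzero $L_1,\ldots,L_k$ is an $L$ with $L=Q_1L_1=\cdots=Q_kL_k$ for some $Q_i\in K[\partial;\delta]$; an LCLM is a nonzero common left multiple of least order. $K[\partial;\delta]_{\le n}$ denotes operators of order at most $n$, and $\phi_n:K[\partial;\delta]_{\le n}\to K^{n+1}$ is the $K$-linear bijection $\sum_{i=0}^n a_i\partial^i\mapsto(a_n,a_{n-1},\ldots,a_0)$. For a nonzero $P$ of order $m$ and $n\ge m$, $S_n(P)$ is the $(n-m+1)\times(n+1)$ matrix whose rows are $\phi_n(\partial^{n-m}P),\phi_n(\partial^{n-m-1}P),\ldots,\phi_n(P)$ in this order (so $S_n(-1)$ is minus the identity of size $n+1$). Vectors are row vectors; the left kernel of a matrix $M$ is $\{v: vM=0\}$. *)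

theory Defs
  imports "HOL-Computational_Algebra.Polynomial" "Jordan_Normal_Form.DL_Rank"
begin

definition is_derivation :: "('a::field \<Rightarrow> 'a) \<Rightarrow> bool" where
  "is_derivation \<delta> \<longleftrightarrow> (\<forall>a b. \<delta> (a + b) = \<delta> a + \<delta> b) \<and>
                           (\<forall>a b. \<delta> (a * b) = a * \<delta> b + \<delta> a * b)"

text \<open>An operator \<open>\<Sum> a_i \<partial>^i\<close> of \<open>K[\<partial>;\<delta>]\<close> is represented by the polynomial
  with coefficients \<open>a_i\<close>; its order is the degree.  Only the multiplication
  differs from the commutative one.  Left multiplication by \<open>\<partial>\<close>:
  \<open>\<partial> (\<Sum> b_j \<partial>^j) = \<Sum> (b_j \<partial>^(j+1) + \<delta>(b_j) \<partial>^j)\<close>.\<close>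
definition dleft :: "('a::field \<Rightarrow> 'a) \<Rightarrow> 'a poly \<Rightarrow> 'a poly" where
  "dleft \<delta> Q = pCons 0 Q + Poly (map \<delta> (coeffs Q))"

definition dmult :: "('a::field \<Rightarrow> 'a) \<Rightarrow> 'a poly \<Rightarrow> 'a poly \<Rightarrow> 'a poly" where
  "dmult \<delta> P Q = (\<Sum>i\<le>degree P. Polynomial.smult (coeff P i) ((dleft \<delta> ^^ i) Q))"

definition common_left_multiple :: "('a::field \<Rightarrow> 'a) \<Rightarrow> 'a poly list \<Rightarrow> 'a poly \<Rightarrow> bool" where
  "common_left_multiple \<delta> Ls L \<longleftrightarrow> (\<forall>i<length Ls. \<exists>Q. L = dmult \<delta> Q (Ls ! i))"

definition ord_lclm :: "('a::field \<Rightarrow> 'a) \<Rightarrow> 'a poly list \<Rightarrow> nat" where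
  "ord_lclm \<delta> Ls = (LEAST m. \<exists>L. L \<noteq> 0 \<and> degree L = m \<and> common_left_multiple \<delta> Ls L)"

definition phi :: "nat \<Rightarrow> 'a::field poly \<Rightarrow> 'a vec" where
  "phi n P = vec (n + 1) (\<lambda>j. coeff P (n - j))"

text \<open>Inverse of \<open>\<phi>_n\<close> on \<open>K^(n+1)\<close> (with \<open>n + 1\<close> the dimension of the vector).\<close>
definition phi_inv :: "'a::field vec \<Rightarrow> 'a poly" where
  "phi_inv u = (\<Sum>j<dim_vec u. Polynomial.monom (u $ j) (dim_vec u - 1 - j))"

text \<open>\<open>S_n(P)\<close>: rows \<open>\<phi>_n(\<partial>^(n-m) P), \<dots>, \<phi>_n(P)\<close>, \<open>m = ord P\<close>.\<close>
definition S_mat :: "('a::field \<Rightarrow> 'a) \<Rightarrow> nat \<Rightarrow> 'a poly \<Rightarrow> 'a mat" where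
  "S_mat \<delta> n P = (let m = degree P in
     mat (n - m + 1) (n + 1)
       (\<lambda>(i, j). coeff (dmult \<delta> (Polynomial.monom 1 (n - m - i)) P) (n - j)))"

text \<open>The block matrix \<open>M_n\<close>: block row \<open>i\<close> (\<open>i < k\<close>) has \<open>S_n(L_i)\<close> in block
  column \<open>i\<close> and zeros elsewhere; the last block row is \<open>(S_n(-1), \<dots>, S_n(-1))\<close>.\<close>
definition M_mat :: "('a::field \<Rightarrow> 'a) \<Rightarrow> nat \<Rightarrow> 'a poly list \<Rightarrow> 'a mat" where
  "M_mat \<delta> n Ls = (let k = length Ls in
     mat_of_rows (k * (n + 1))
       (concat (map (\<lambda>i. map (\<lambda>t. vec (k * (n + 1))
                    (\<lambda>b. if b div (n + 1) = i
                         then S_mat \<delta> n (Ls ! i) $$ (t, b mod (n + 1)) else 0))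
                   [0..<dim_row (S_mat \<delta> n (Ls ! i))]) [0..<k])
        @ map (\<lambda>t. vec (k * (n + 1)) (\<lambda>b. S_mat \<delta> n (-1) $$ (t, b mod (n + 1))))
              [0..<n + 1]))"

definition left_kernel :: "'a::field mat \<Rightarrow> 'a vec set" where
  "left_kernel M = {v. dim_vec v = dim_row M \<and>
     (\<forall>j<dim_col M. (\<Sum>i<dim_row M. v $ i * M $$ (i, j)) = 0)}"

definition concat_vecs :: "'a vec list \<Rightarrow> 'a vec \<Rightarrow> 'a vec" where
  "concat_vecs us u = foldr (\<lambda>v w. v @\<^sub>v w) us u"

definition mat_rank :: "'a::field mat \<Rightarrow> nat" where
  "mat_rank M = vec_space.rank (dim_row M) M"

end

theory Submission
  imports Defs "Jordan_Normal_Form.Matrix_Kernel"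
begin


lemma deriv_add: "is_derivation \<delta> \<Longrightarrow> \<delta> (a + b) = \<delta> a + \<delta> b"
  unfolding is_derivation_def by blast
lemma deriv_mult: "is_derivation \<delta> \<Longrightarrow> \<delta> (a * b) = a * \<delta> b + \<delta> a * b"
  unfolding is_derivation_def by blast
lemma deriv_0: "is_derivation \<delta> \<Longrightarrow> \<delta> 0 = 0"
  using deriv_add[of \<delta> 0 0] by (metis add_cancel_right_right)

lemma coeff_Poly_map_coeffs: "f 0 = 0 \<Longrightarrow> coeff (Poly (map f (coeffs p))) i = f (coeff p i)"
  by (simp add: nth_default_map_eq[of f 0 0] nth_default_coeffs_eq)

lemma coeff_dleft_0: "\<delta> 0 = 0 \<Longrightarrow> coeff (dleft \<delta> p) 0 = \<delta> (coeff p 0)"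
  by (simp add: dleft_def nth_default_map_eq[of \<delta> 0 0] nth_default_coeffs_eq)
lemma coeff_dleft_Suc: "\<delta> 0 = 0 \<Longrightarrow> coeff (dleft \<delta> p) (Suc i) = coeff p i + \<delta> (coeff p (Suc i))"
  by (simp add: dleft_def nth_default_map_eq[of \<delta> 0 0] nth_default_coeffs_eq)

lemma dleft_0[simp]: "dleft \<delta> 0 = 0"
  by (simp add: dleft_def)

lemma dlpow_0[simp]: "(dleft \<delta> ^^ j) 0 = 0"
  by (induction j) auto

lemma dleft_add: "is_derivation \<delta> \<Longrightarrow> dleft \<delta> (p + q) = dleft \<delta> p + dleft \<delta> q"
  apply (rule poly_eqI)
  subgoal for i by (cases i) (auto simp: coeff_dleft_0 coeff_dleft_Suc deriv_0 deriv_add)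
  done

lemma dleft_smult: "is_derivation \<delta> \<Longrightarrow>
   dleft \<delta> (Polynomial.smult a p) = Polynomial.smult a (dleft \<delta> p) + Polynomial.smult (\<delta> a) p"
  apply (rule poly_eqI)
  subgoal for i by (cases i) (auto simp: coeff_dleft_0 coeff_dleft_Suc deriv_0 deriv_mult algebra_simps)
  done

lemma dleft_monom: "is_derivation \<delta> \<Longrightarrow>
   dleft \<delta> (Polynomial.monom a k) = Polynomial.monom a (Suc k) + Polynomial.monom (\<delta> a) k"
  apply (rule poly_eqI)
  subgoal for i by (cases i) (auto simp: coeff_dleft_0 coeff_dleft_Suc deriv_0 coeff_monom)
  done

lemma dleft_minus: "is_derivation \<delta> \<Longrightarrow> dleft \<delta> (- p) = - dleft \<delta> p"
  using dleft_add[of \<delta> p "-p"] by (metis add.right_inverse dleft_0 minus_unique)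

lemma dleft_diff: "is_derivation \<delta> \<Longrightarrow> dleft \<delta> (p - q) = dleft \<delta> p - dleft \<delta> q"
  using dleft_add[of \<delta> p "-q"] dleft_minus[of \<delta> q] by simp

lemma dleft_sum: "is_derivation \<delta> \<Longrightarrow> dleft \<delta> (\<Sum>i\<in>A. f i) = (\<Sum>i\<in>A. dleft \<delta> (f i))"
  by (induction A rule: infinite_finite_induct) (auto simp: dleft_add)

lemma dlpow_add: "is_derivation \<delta> \<Longrightarrow> (dleft \<delta> ^^ j) (p + q) = (dleft \<delta> ^^ j) p + (dleft \<delta> ^^ j) q"
  by (induction j) (auto simp: dleft_add)

lemma degree_dleft_le: "\<delta> 0 = 0 \<Longrightarrow> degree (dleft \<delta> p) \<le> Suc (degree p)"
  apply (rule degree_le)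
  apply (auto simp: coeff_dleft_Suc coeff_eq_0 Suc_less_eq2)
  done

lemma coeff_dleft_top: "\<delta> 0 = 0 \<Longrightarrow> coeff (dleft \<delta> p) (Suc (degree p)) = lead_coeff p"
  by (simp add: coeff_dleft_Suc coeff_eq_0)

lemma degree_dleft: "\<delta> 0 = 0 \<Longrightarrow> p \<noteq> 0 \<Longrightarrow> degree (dleft \<delta> p) = Suc (degree p)"
  by (metis coeff_dleft_top degree_dleft_le le_antisym le_degree leading_coeff_0_iff)

lemma lead_coeff_dleft: "\<delta> 0 = 0 \<Longrightarrow> p \<noteq> 0 \<Longrightarrow> lead_coeff (dleft \<delta> p) = lead_coeff p"
  by (simp add: degree_dleft coeff_dleft_top)

lemma degree_dlpow: "\<delta> 0 = 0 \<Longrightarrow> p \<noteq> 0 \<Longrightarrow>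
   degree ((dleft \<delta> ^^ j) p) = degree p + j \<and> lead_coeff ((dleft \<delta> ^^ j) p) = lead_coeff p"
proof (induction j)
  case (Suc j)
  then have "(dleft \<delta> ^^ j) p \<noteq> 0" by auto
  then have "degree (dleft \<delta> ((dleft \<delta> ^^ j) p)) = Suc (degree ((dleft \<delta> ^^ j) p))"
    "lead_coeff (dleft \<delta> ((dleft \<delta> ^^ j) p)) = lead_coeff ((dleft \<delta> ^^ j) p)"
    using Suc degree_dleft lead_coeff_dleft by blast+
  moreover have "degree ((dleft \<delta> ^^ j) p) = degree p + j" "lead_coeff ((dleft \<delta> ^^ j) p) = lead_coeff p"
    using Suc by auto
  ultimately have "degree (dleft \<delta> ((dleft \<delta> ^^ j) p)) = degree p + Suc j"
    "lead_coeff (dleft \<delta> ((dleft \<delta> ^^ j) p)) = lead_coeff p" by (simp, metis)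
  then show ?case by (simp only: funpow.simps comp_apply)
qed auto

lemma degree_dlpow_le: "\<delta> 0 = 0 \<Longrightarrow> degree ((dleft \<delta> ^^ j) p) \<le> degree p + j"
  by (cases "p = 0") (auto simp: degree_dlpow)

lemma dmult_bound: "degree P \<le> m \<Longrightarrow>
  dmult \<delta> P Q = (\<Sum>i\<le>m. Polynomial.smult (coeff P i) ((dleft \<delta> ^^ i) Q))"
  unfolding dmult_def
  by (rule sum.mono_neutral_left) (auto simp: coeff_eq_0)

lemma dmult_add1: "dmult \<delta> (P + R) Q = dmult \<delta> P Q + dmult \<delta> R Q"
proof -
  define m where "m = max (degree P) (degree R)"
  have "degree (P + R) \<le> m" "degree P \<le> m" "degree R \<le> m"
    by (auto simp: m_def degree_add_le)
  note h = this
  have "dmult \<delta> (P + R) Q = (\<Sum>i\<le>m. Polynomial.smult (coeff (P + R) i) ((dleft \<delta> ^^ i) Q))"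
    by (rule dmult_bound) (rule h(1))
  also have "\<dots> = (\<Sum>i\<le>m. Polynomial.smult (coeff P i) ((dleft \<delta> ^^ i) Q) + Polynomial.smult (coeff R i) ((dleft \<delta> ^^ i) Q))"
    by (simp add: smult_add_left)
  also have "\<dots> = dmult \<delta> P Q + dmult \<delta> R Q"
    by (simp only: sum.distrib dmult_bound[OF h(2), symmetric] dmult_bound[OF h(3), symmetric])
  finally show ?thesis .
qed

lemma smult_sum_right: "Polynomial.smult c (\<Sum>i\<in>A. f i) = (\<Sum>i\<in>A. Polynomial.smult c (f i))"
  by (induction A rule: infinite_finite_induct) (auto simp: smult_add_right)

lemma dmult_smult1: "dmult \<delta> (Polynomial.smult c P) Q = Polynomial.smult c (dmult \<delta> P Q)"
  using dmult_bound[of P "degree P"] dmult_bound[of "Polynomial.smult c P" "degree P"]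
  by (simp add: smult_sum_right)

lemma dmult_0_left[simp]: "dmult \<delta> 0 Q = 0"
  by (simp add: dmult_def)

lemma dmult_0_right[simp]: "dmult \<delta> P 0 = 0"
  by (simp add: dmult_def)

lemma dmult_minus1: "dmult \<delta> (- P) Q = - dmult \<delta> P Q"
  using dmult_add1[of \<delta> P "-P" Q] by (metis add.right_inverse dmult_0_left minus_unique)

lemma dmult_diff1: "dmult \<delta> (P - R) Q = dmult \<delta> P Q - dmult \<delta> R Q"
  using dmult_add1[of \<delta> P "-R" Q] dmult_minus1[of \<delta> R Q] by simp

lemma dmult_sum1: "dmult \<delta> (\<Sum>i\<in>A. f i) Q = (\<Sum>i\<in>A. dmult \<delta> (f i) Q)"
  by (induction A rule: infinite_finite_induct) (auto simp: dmult_add1)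

lemma dmult_monom: "dmult \<delta> (Polynomial.monom c k) Q = Polynomial.smult c ((dleft \<delta> ^^ k) Q)"
proof -
  have "dmult \<delta> (Polynomial.monom c k) Q = (\<Sum>i\<le>k. Polynomial.smult (coeff (Polynomial.monom c k) i) ((dleft \<delta> ^^ i) Q))"
    by (rule dmult_bound) (simp add: degree_monom_le)
  also have "\<dots> = (\<Sum>i\<le>k. if i = k then Polynomial.smult c ((dleft \<delta> ^^ i) Q) else 0)"
    by (rule sum.cong) (auto simp: coeff_monom)
  also have "\<dots> = Polynomial.smult c ((dleft \<delta> ^^ k) Q)" by simp
  finally show ?thesis .
qed

lemma coeff_dmult: "degree P \<le> m \<Longrightarrow>
  coeff (dmult \<delta> P Q) k = (\<Sum>i\<le>m. coeff P i * coeff ((dleft \<delta> ^^ i) Q) k)"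
  by (simp add: dmult_bound[of _ m] coeff_sum)

lemma degree_dmult_le: assumes d0: "\<delta> 0 = 0" shows "degree (dmult \<delta> P Q) \<le> degree P + degree Q"
proof (rule degree_le, intro allI impI)
  fix k assume k: "degree P + degree Q < k"
  have "coeff ((dleft \<delta> ^^ i) Q) k = 0" if "i \<le> degree P" for i
    using degree_dlpow_le[of \<delta> i Q, OF d0] that k by (intro coeff_eq_0) auto
  then show "coeff (dmult \<delta> P Q) k = 0" by (simp add: coeff_dmult[of P "degree P"])
qed

lemma degree_dmult: assumes "\<delta> 0 = 0" "P \<noteq> 0" "Q \<noteq> 0"
  shows "degree (dmult \<delta> P Q) = degree P + degree Q \<and>
         lead_coeff (dmult \<delta> P Q) = lead_coeff P * lead_coeff Q"
proof -
  let ?k = "degree P + degree Q"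
  have "coeff (dmult \<delta> P Q) ?k = (\<Sum>i\<le>degree P. coeff P i * coeff ((dleft \<delta> ^^ i) Q) ?k)"
    by (simp add: coeff_dmult[of P "degree P"])
  also have "\<dots> = (\<Sum>i\<in>{degree P}. coeff P i * coeff ((dleft \<delta> ^^ i) Q) ?k)"
  proof (rule sum.mono_neutral_right)
    show "\<forall>i\<in>{..degree P} - {degree P}. coeff P i * coeff ((dleft \<delta> ^^ i) Q) ?k = 0"
    proof
      fix i assume "i \<in> {..degree P} - {degree P}"
      then have "degree ((dleft \<delta> ^^ i) Q) < ?k" using degree_dlpow[of \<delta> Q i, OF assms(1,3)] by auto
      then show "coeff P i * coeff ((dleft \<delta> ^^ i) Q) ?k = 0" by (simp add: coeff_eq_0)
    qed
  qed auto
  also have "\<dots> = lead_coeff P * lead_coeff Q"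
  proof -
    have "coeff ((dleft \<delta> ^^ degree P) Q) (degree P + degree Q) = lead_coeff Q"
      using degree_dlpow[of \<delta> Q "degree P", OF assms(1,3)] by (metis add.commute)
    then show ?thesis by simp
  qed
  finally have c: "coeff (dmult \<delta> P Q) ?k = lead_coeff P * lead_coeff Q" .
  then have "coeff (dmult \<delta> P Q) ?k \<noteq> 0" using assms by simp
  then have "degree (dmult \<delta> P Q) = ?k"
    using degree_dmult_le[of \<delta> P Q, OF assms(1)] le_degree by (metis le_antisym)
  then show ?thesis using c by simp
qed

lemma dmult_eq_0_iff: "\<delta> 0 = 0 \<Longrightarrow> dmult \<delta> P Q = 0 \<longleftrightarrow> P = 0 \<or> Q = 0"
  using degree_dmult[of \<delta> P Q] by (metis dmult_0_left dmult_0_right leading_coeff_0_iff mult_eq_0_iff)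

lemma dmult_cancel: "\<delta> 0 = 0 \<Longrightarrow> Q \<noteq> 0 \<Longrightarrow> dmult \<delta> A Q = dmult \<delta> B Q \<Longrightarrow> A = B"
  using dmult_diff1[of \<delta> A B Q] dmult_eq_0_iff[of \<delta> "A - B" Q] by simp

lemma dmult_monom_sum: "dmult \<delta> P Q = (\<Sum>i\<le>degree P. dmult \<delta> (Polynomial.monom (coeff P i) i) Q)"
  unfolding dmult_monom by (simp add: dmult_def)

lemma dleft_dmult: assumes d: "is_derivation \<delta>"
  shows "dleft \<delta> (dmult \<delta> P Q) = dmult \<delta> (dleft \<delta> P) Q"
proof -
  have "dleft \<delta> (dmult \<delta> P Q) = (\<Sum>i\<le>degree P. dleft \<delta> (dmult \<delta> (Polynomial.monom (coeff P i) i) Q))"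
    by (simp add: dmult_monom_sum[of _ P] dleft_sum[OF d])
  also have "\<dots> = (\<Sum>i\<le>degree P. dmult \<delta> (dleft \<delta> (Polynomial.monom (coeff P i) i)) Q)"
    by (rule sum.cong) (auto simp: dmult_monom dleft_monom[OF d] dleft_smult[OF d] dmult_add1)
  also have "\<dots> = dmult \<delta> (dleft \<delta> (\<Sum>i\<le>degree P. Polynomial.monom (coeff P i) i)) Q"
    by (simp add: dleft_sum[OF d] dmult_sum1)
  also have "\<dots> = dmult \<delta> (dleft \<delta> P) Q"
    by (simp add: poly_as_sum_of_monoms)
  finally show ?thesis .
qed

lemma dlpow_dmult: "is_derivation \<delta> \<Longrightarrow> (dleft \<delta> ^^ j) (dmult \<delta> P Q) = dmult \<delta> ((dleft \<delta> ^^ j) P) Q"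
  by (induction j) (auto simp: dleft_dmult)

lemma dmult_assoc: assumes d: "is_derivation \<delta>"
  shows "dmult \<delta> R (dmult \<delta> P Q) = dmult \<delta> (dmult \<delta> R P) Q"
proof -
  have "dmult \<delta> R (dmult \<delta> P Q) = (\<Sum>i\<le>degree R. Polynomial.smult (coeff R i) (dmult \<delta> ((dleft \<delta> ^^ i) P) Q))"
    by (simp add: dmult_def[of \<delta> R] dlpow_dmult[OF d])
  also have "\<dots> = dmult \<delta> (\<Sum>i\<le>degree R. Polynomial.smult (coeff R i) ((dleft \<delta> ^^ i) P)) Q"
    by (simp add: dmult_sum1 dmult_smult1)
  also have "\<dots> = dmult \<delta> (dmult \<delta> R P) Q" by (simp add: dmult_def[of \<delta> R P])
  finally show ?thesis .
qed




lemma rank_plus_leftker: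
  fixes A X :: "'a::field mat"
  assumes A: "A \<in> carrier_mat N C" and X: "X \<in> carrier_mat N s"
  and Xinj: "\<And>y. y \<in> carrier_vec s \<Longrightarrow> X *\<^sub>v y = 0\<^sub>v N \<Longrightarrow> y = 0\<^sub>v s"
  and ker: "\<And>v. v \<in> carrier_vec N \<Longrightarrow> (A\<^sup>T *\<^sub>v v = 0\<^sub>v C) = (\<exists>y\<in>carrier_vec s. v = X *\<^sub>v y)"
  shows "vec_space.rank N A + s = N"
proof -
  interpret VN: vec_space "TYPE('a)" N .
  define P where "P = (\<lambda>T. T \<subseteq> set (cols A) \<and> VN.lin_indpt T)"
  obtain S where maxS: "maximal S P"
    using maximal_exists[of P "card (set (cols A))" "{}"] unfolding P_def
    by (meson List.finite_set card_mono empty_iff empty_subsetI VN.finite_lin_indpt2 rev_finite_subset)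
  then have S: "S \<subseteq> set (cols A)" "VN.lin_indpt S" unfolding maximal_def P_def by auto
  have fin: "finite S" using S(1) finite_subset by blast
  have rk: "VN.rank A = card S" using VN.rank_card_indpt[OF A] maxS unfolding P_def by blast
  have colsA: "set (cols A) \<subseteq> carrier_vec N" using A cols_dim by blast
  have Scar: "S \<subseteq> carrier_vec N" using S(1) colsA by blast
  have spanA: "set (cols A) \<subseteq> VN.span S"
  proof
    fix c assume c: "c \<in> set (cols A)"
    then have ccar: "c \<in> carrier_vec N" using colsA by blast
    show "c \<in> VN.span S"
    proof (cases "c \<in> S")
      case True then show ?thesis using VN.in_own_span[OF Scar] by auto
    next
      case False
      have "\<not> P (S \<union> {c})"
      proof
        assume "P (S \<union> {c})"
        then have "S \<union> {c} = S" using maxS unfolding maximal_def by blast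
        then show False using False by blast
      qed
      then have "VN.lin_dep (S \<union> {c})" using S c unfolding P_def by blast
      then show ?thesis using VN.lin_dep_iff_in_span[OF Scar S(2) ccar False] by blast
    qed
  qed
  have r_le: "card S \<le> N" using VN.li_le_dim(2)[OF VN.fin_dim Scar S(2)] VN.dim_is_n by simp
  obtain ss where ss: "set ss = S" "distinct ss" using finite_distinct_list[OF fin] by blast
  let ?r = "card S"
  have lss: "length ss = ?r" using ss distinct_card by fastforce
  define B where "B = mat_of_cols N ss"
  have B: "B \<in> carrier_mat N ?r" unfolding B_def using lss by auto
  have colsB: "cols B = ss" unfolding B_def using ss Scar by simp
  have Bt: "B\<^sup>T \<in> carrier_mat ?r N" using B by simp
  have kerAB: "mat_kernel A\<^sup>T = mat_kernel B\<^sup>T"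
  proof -
    have eqA: "(A\<^sup>T *\<^sub>v v = 0\<^sub>v C) = (\<forall>c\<in>set (cols A). v \<bullet> c = 0)" if v: "v \<in> carrier_vec N" for v
    proof -
      have "(A\<^sup>T *\<^sub>v v = 0\<^sub>v C) = (\<forall>j<C. col A j \<bullet> v = 0)"
        using A v by (auto simp: vec_eq_iff)
      also have "\<dots> = (\<forall>j<C. v \<bullet> col A j = 0)"
        using A v by (metis col_dim comm_scalar_prod carrier_matD(1))
      also have "\<dots> = (\<forall>c\<in>set (cols A). v \<bullet> c = 0)"
        using A by (auto simp: cols_def)
      finally show ?thesis .
    qed
    have eqB: "(B\<^sup>T *\<^sub>v v = 0\<^sub>v ?r) = (\<forall>c\<in>S. v \<bullet> c = 0)" if v: "v \<in> carrier_vec N" for v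
    proof -
      have "(B\<^sup>T *\<^sub>v v = 0\<^sub>v ?r) = (\<forall>j<?r. col B j \<bullet> v = 0)"
        using B v by (auto simp: vec_eq_iff)
      also have "\<dots> = (\<forall>j<?r. v \<bullet> col B j = 0)"
        using B v by (metis col_dim comm_scalar_prod carrier_matD(1))
      also have "\<dots> = (\<forall>c\<in>set (cols B). v \<bullet> c = 0)"
        using B by (auto simp: cols_def)
      finally show ?thesis using colsB ss by simp
    qed
    have "(\<forall>c\<in>set (cols A). v \<bullet> c = 0) = (\<forall>c\<in>S. v \<bullet> c = 0)" if v: "v \<in> carrier_vec N" for v
    proof
      assume "\<forall>c\<in>set (cols A). v \<bullet> c = 0"
      then show "\<forall>c\<in>S. v \<bullet> c = 0" using S(1) by blast
    next
      assume "\<forall>c\<in>S. v \<bullet> c = 0"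
      then have "v \<in> VN.orthogonal_complement S" unfolding VN.orthogonal_complement_def using v by auto
      then have "v \<in> VN.orthogonal_complement (VN.span S)" using VN.in_orthogonal_complement_span[OF Scar] by simp
      then show "\<forall>c\<in>set (cols A). v \<bullet> c = 0" using spanA unfolding VN.orthogonal_complement_def by blast
    qed
    then show ?thesis unfolding mat_kernel_def using A B eqA eqB by auto
  qed
  obtain G where G: "gauss_jordan_single B\<^sup>T = G" by simp
  note gj = gauss_jordan_single[OF Bt G]
  obtain Pm Qm where PQ: "G = Pm * B\<^sup>T" "Pm \<in> carrier_mat ?r ?r" "Qm \<in> carrier_mat ?r ?r"
     "Pm * Qm = 1\<^sub>m ?r" "Qm * Pm = 1\<^sub>m ?r" using gj(4) by blast
  have rows_nz: "{i. i < ?r \<and> row G i \<noteq> 0\<^sub>v N} = {i. i < ?r}"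
  proof (rule ccontr)
    assume "{i. i < ?r \<and> row G i \<noteq> 0\<^sub>v N} \<noteq> {i. i < ?r}"
    then obtain i where i: "i < ?r" "row G i = 0\<^sub>v N" by blast
    define y where "y = row Pm i"
    have ycar: "y \<in> carrier_vec ?r" unfolding y_def using PQ(2) i by auto
    have "B *\<^sub>v y = 0\<^sub>v N"
    proof (rule eq_vecI)
      fix j assume j: "j < dim_vec (0\<^sub>v N)"
      then have "0 = G $$ (i, j)" using i gj(2)
        by (metis carrier_matD(1) carrier_matD(2) index_row(1) index_zero_vec(1) index_zero_vec(2))
      also have "\<dots> = y \<bullet> col B\<^sup>T j" unfolding PQ(1) y_def using PQ(2) Bt i j by simp
      also have "\<dots> = row B j \<bullet> y" using B j ycar by (simp add: comm_scalar_prod[of _ ?r])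
      finally show "(B *\<^sub>v y) $ j = 0\<^sub>v N $ j" using B j by simp
    qed (use B in simp)
    moreover have "y \<noteq> 0\<^sub>v ?r"
    proof
      assume y0: "y = 0\<^sub>v ?r"
      have "1 = (Pm * Qm) $$ (i, i)" using PQ(4) i by simp
      also have "\<dots> = y \<bullet> col Qm i" unfolding y_def using PQ(2,3) i by simp
      also have "\<dots> = 0" using y0 PQ(3) i by simp
      finally show False by simp
    qed
    ultimately have "VN.lin_dep (set (cols B))"
      using VN.lin_depI[OF B ycar] colsB ss by blast
    then show False using S(2) colsB ss by simp
  qed
  have "kernel.dim N G = N - ?r" using find_base_vectors(6)[OF gj(3) gj(2)] rows_nz by simp
  have kerX: "mat_kernel A\<^sup>T = VN.span (set (cols X))"
  proof -
    have "mat_kernel A\<^sup>T = {v \<in> carrier_vec N. \<exists>y\<in>carrier_vec s. v = X *\<^sub>v y}"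
      unfolding mat_kernel_def using A ker by auto
    also have "\<dots> = VN.col_space X" using VN.col_space_eq[OF X] X by auto
    finally show ?thesis unfolding VN.col_space_def .
  qed
  have distX: "distinct (cols X)"
  proof (rule ccontr)
    assume "\<not> distinct (cols X)"
    then obtain i j where ij: "i < s" "j < s" "i \<noteq> j" "col X i = col X j"
      using X by (auto simp: distinct_conv_nth)
    define y :: "'a vec" where "y = unit_vec s i - unit_vec s j"
    have ycar: "y \<in> carrier_vec s" unfolding y_def by simp
    have "X *\<^sub>v y = 0\<^sub>v N"
    proof (rule eq_vecI)
      fix l assume l: "l < dim_vec (0\<^sub>v N)"
      have "(X *\<^sub>v y) $ l = row X l \<bullet> y" using X l by simp
      also have "\<dots> = row X l \<bullet> unit_vec s i - row X l \<bullet> unit_vec s j"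
        unfolding y_def using X l by (intro scalar_prod_minus_distrib[of _ s]) auto
      also have "\<dots> = X $$ (l, i) - X $$ (l, j)" using X l ij(1,2) by simp
      also have "\<dots> = col X i $ l - col X j $ l" using X l ij(1,2) by simp
      also have "\<dots> = 0" using ij by simp
      finally show "(X *\<^sub>v y) $ l = 0\<^sub>v N $ l" using l by simp
    qed (use X in simp)
    then have "y = 0\<^sub>v s" using Xinj ycar by blast
    then have "y $ i = 0" by (simp add: ij)
    then show False unfolding y_def using ij by simp
  qed
  have indX: "VN.lin_indpt (set (cols X))"
  proof
    assume "VN.lin_dep (set (cols X))"
    then obtain y where "y \<in> carrier_vec s" "y \<noteq> 0\<^sub>v s" "X *\<^sub>v y = 0\<^sub>v N"
      using VN.lin_depE[OF X _ distX] by blast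
    then show False using Xinj by blast
  qed
  have rX: "VN.rank X = s" using VN.lin_indpt_full_rank[OF X distX indX] .
  have kG: "mat_kernel G = mat_kernel B\<^sup>T"
    unfolding mat_kernel_def using gj(1) gj(2) Bt by auto
  have "kernel.dim N G = VN.rank X"
    unfolding VN.rank_def using kG kerAB kerX by simp
  then show ?thesis using rk rX r_le \<open>kernel.dim N G = N - ?r\<close> by simp
qed




lemma dim_phi[simp]: "dim_vec (phi m Q) = Suc m" by (simp add: phi_def)
lemma phi_index[simp]: "j < Suc m \<Longrightarrow> phi m Q $ j = coeff Q (m - j)" by (simp add: phi_def)

lemma coeff_phi_inv: "coeff (phi_inv u) i = (if i < dim_vec u then u $ (dim_vec u - 1 - i) else 0)"
proof -
  have "coeff (phi_inv u) i = (\<Sum>j<dim_vec u. if dim_vec u - 1 - j = i then u $ j else 0)"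
    by (simp add: phi_inv_def coeff_sum coeff_monom)
  also have "\<dots> = (\<Sum>j<dim_vec u. if j = dim_vec u - 1 - i \<and> i < dim_vec u then u $ j else 0)"
    by (rule sum.cong) auto
  also have "\<dots> = (if i < dim_vec u then u $ (dim_vec u - 1 - i) else 0)"
    by (cases "i < dim_vec u") (auto simp: sum.delta)
  finally show ?thesis .
qed

lemma degree_phi_inv: "degree (phi_inv u) \<le> dim_vec u - 1"
  by (rule degree_le) (auto simp: coeff_phi_inv)

lemma phi_inv_phi: "degree Q \<le> m \<Longrightarrow> phi_inv (phi m Q) = Q"
  by (rule poly_eqI) (auto simp: coeff_phi_inv coeff_eq_0)

lemma phi_phi_inv: "dim_vec u = Suc m \<Longrightarrow> phi m (phi_inv u) = u"
  by (intro eq_vecI) (auto simp: coeff_phi_inv)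

lemma phi_inv_zero_vec[simp]: "phi_inv (0\<^sub>v n) = 0"
  by (simp add: phi_inv_def)

lemma phi_inv_eq_0: assumes "phi_inv u = 0" shows "u = 0\<^sub>v (dim_vec u)"
proof (intro eq_vecI)
  fix i assume i: "i < dim_vec (0\<^sub>v (dim_vec u))"
  then have "coeff (phi_inv u) (dim_vec u - 1 - i) = u $ i" by (simp add: coeff_phi_inv)
  then show "u $ i = 0\<^sub>v (dim_vec u) $ i" using assms i by simp
qed auto

lemma phi_zero[simp]: "phi m 0 = 0\<^sub>v (Suc m)" by (intro eq_vecI) auto
lemma phi_add: "phi m (P + Q) = phi m P + phi m Q" by (intro eq_vecI) auto
lemma phi_smult: "phi m (Polynomial.smult c P) = c \<cdot>\<^sub>v phi m P" by (intro eq_vecI) auto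

lemma phi_eq_0: "degree Q \<le> m \<Longrightarrow> phi m Q = 0\<^sub>v (Suc m) \<Longrightarrow> Q = 0"
  by (metis phi_inv_phi phi_inv_zero_vec)

lemma concat_vecs_Nil[simp]: "concat_vecs [] u = u" by (simp add: concat_vecs_def)
lemma concat_vecs_Cons[simp]: "concat_vecs (v # us) u = v @\<^sub>v concat_vecs us u"
  by (simp add: concat_vecs_def)

lemma dim_concat_vecs: "dim_vec (concat_vecs us u) = sum_list (map dim_vec us) + dim_vec u"
  by (induction us) auto

lemma concat_vecs_add:
  assumes "\<And>b. b \<in> set bs \<Longrightarrow> dim_vec (f b) = dim_vec (g b)" "dim_vec u = dim_vec w"
  shows "concat_vecs (map f bs) u + concat_vecs (map g bs) w = concat_vecs (map (\<lambda>b. f b + g b) bs) (u + w)"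
  using assms
proof (induction bs)
  case (Cons b bs)
  have fb: "dim_vec (f b) = dim_vec (g b)" using Cons.prems(1) by simp
  then have "f b \<in> carrier_vec (dim_vec (f b))" "g b \<in> carrier_vec (dim_vec (f b))"
    unfolding carrier_vec_def by auto
  moreover have "concat_vecs (map f bs) u \<in> carrier_vec (dim_vec (concat_vecs (map f bs) u))"
    "concat_vecs (map g bs) w \<in> carrier_vec (dim_vec (concat_vecs (map f bs) u))"
  proof -
    have e: "map (dim_vec \<circ> f) bs = map (dim_vec \<circ> g) bs" using Cons.prems(1) by auto
    have d1: "dim_vec (concat_vecs (map g bs) w) = dim_vec (concat_vecs (map f bs) u)"
      by (simp only: dim_concat_vecs map_map e Cons.prems(2))
    show "concat_vecs (map f bs) u \<in> carrier_vec (dim_vec (concat_vecs (map f bs) u))"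
      "concat_vecs (map g bs) w \<in> carrier_vec (dim_vec (concat_vecs (map f bs) u))"
      using d1 unfolding carrier_vec_def by simp_all
  qed
  ultimately have A: "(f b @\<^sub>v concat_vecs (map f bs) u) + (g b @\<^sub>v concat_vecs (map g bs) w)
     = (f b + g b) @\<^sub>v (concat_vecs (map f bs) u + concat_vecs (map g bs) w)"
    by (intro append_vec_add) assumption+
  have IH: "concat_vecs (map f bs) u + concat_vecs (map g bs) w = concat_vecs (map (\<lambda>b. f b + g b) bs) (u + w)"
    using Cons.prems by (intro Cons.IH) auto
  show ?case using A by (simp only: list.map concat_vecs_Cons IH)
qed simp

lemma concat_vecs_smult:
  "c \<cdot>\<^sub>v concat_vecs (map f bs) u = concat_vecs (map (\<lambda>b. c \<cdot>\<^sub>v f b) bs) (c \<cdot>\<^sub>v u)"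
proof (induction bs)
  case (Cons b bs)
  have "c \<cdot>\<^sub>v (x @\<^sub>v y) = (c \<cdot>\<^sub>v x) @\<^sub>v (c \<cdot>\<^sub>v y)" for x y :: "'a vec"
    by (intro eq_vecI) auto
  then show ?case using Cons by simp
qed simp

lemma concat_vecs_zero:
  assumes "\<forall>v\<in>set us. v = 0\<^sub>v (dim_vec v)" "u = 0\<^sub>v (dim_vec u)"
  shows "concat_vecs us u = 0\<^sub>v (dim_vec (concat_vecs us u))"
  using assms
proof (induction us)
  case (Cons v us)
  have "(0\<^sub>v a @\<^sub>v 0\<^sub>v b) = (0\<^sub>v (a + b) :: 'a vec)" for a b
    by (intro eq_vecI) auto
  then show ?case using Cons by (metis concat_vecs_Cons index_append_vec(2) list.set_intros(1,2))
qed simp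

lemma concat_vecs_zero_last:
  assumes "concat_vecs us u = 0\<^sub>v n" shows "u = 0\<^sub>v (dim_vec u)"
  using assms
proof (induction us arbitrary: n)
  case (Cons v us)
  have "concat_vecs us u = 0\<^sub>v (n - dim_vec v)"
  proof (intro eq_vecI)
    fix i assume "i < dim_vec (0\<^sub>v (n - dim_vec v))"
    then have "i + dim_vec v < n" by simp
    then show "concat_vecs us u $ i = 0\<^sub>v (n - dim_vec v) $ i"
      using Cons(2) index_append_vec(1)[of "i + dim_vec v" v "concat_vecs us u"]
      by (metis add_diff_cancel_right' concat_vecs_Cons index_append_vec(2) index_zero_vec(1,2) not_add_less2 \<open>i < dim_vec (0\<^sub>v (n - dim_vec v))\<close>)
  next
    show "dim_vec (concat_vecs us u) = dim_vec (0\<^sub>v (n - dim_vec v))"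
      using Cons(2) by (metis add_diff_cancel_left' concat_vecs_Cons index_append_vec(2) index_zero_vec(2))
  qed
  then show ?case using Cons(1) by blast
qed auto

lemma concat_vecs_split:
  "v \<in> carrier_vec (sum_list ds + m) \<Longrightarrow> \<exists>us u. length us = length ds \<and>
     (\<forall>b<length ds. dim_vec (us!b) = ds!b) \<and> dim_vec u = m \<and> v = concat_vecs us u"
proof (induction ds arbitrary: v)
  case Nil then show ?case by (intro exI[of _ "[]"]) auto
next
  case (Cons d ds)
  then have v: "v \<in> carrier_vec (d + (sum_list ds + m))" by (simp add: add.assoc)
  obtain us u where IH: "length us = length ds" "\<forall>b<length ds. dim_vec (us!b) = ds!b" "dim_vec u = m"
    "vec_last v (sum_list ds + m) = concat_vecs us u"
    using Cons(1)[of "vec_last v (sum_list ds + m)"] by auto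
  have "v = vec_first v d @\<^sub>v vec_last v (sum_list ds + m)" using vec_first_last_append[OF v] by simp
  then show ?case using IH
    by (intro exI[of _ "vec_first v d # us"] exI[of _ u]) (auto simp: nth_Cons split: nat.splits)
qed

definition rs_sum :: "'a::comm_ring_1 vec \<Rightarrow> 'a vec list \<Rightarrow> nat \<Rightarrow> 'a" where
  "rs_sum a rs j = (\<Sum>i<length rs. a $ i * rs ! i $ j)"

lemma sum_lessThan_add_nat: "(\<Sum>i<a + b. f i) = (\<Sum>i<a. f i) + (\<Sum>i<b. f (a + i::nat))"
  by (induction b) (auto simp: add.assoc)

lemma rs_sum_append: "dim_vec a = length rs1 \<Longrightarrow> dim_vec b = length rs2 \<Longrightarrow>
  rs_sum (a @\<^sub>v b) (rs1 @ rs2) j = rs_sum a rs1 j + rs_sum b rs2 j"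
  unfolding rs_sum_def by (simp add: sum_lessThan_add_nat nth_append)

lemma rs_sum_concat:
  "length us = length rbs \<Longrightarrow> (\<forall>b<length us. dim_vec (us!b) = length (rbs!b)) \<Longrightarrow> dim_vec u = length lr \<Longrightarrow>
   rs_sum (concat_vecs us u) (concat rbs @ lr) j = (\<Sum>b<length us. rs_sum (us!b) (rbs!b) j) + rs_sum u lr j"
proof (induction us rbs rule: list_induct2)
  case (Cons x xs y ys)
  have pr: "\<forall>b<length xs. dim_vec (xs!b) = length (ys!b)"
  proof (intro allI impI)
    fix b assume "b < length xs"
    then show "dim_vec (xs!b) = length (ys!b)" using Cons.prems(1)[rule_format, of "Suc b"] by simp
  qed
  note Cons = Cons pr
  have d: "dim_vec (concat_vecs xs u) = length (concat ys @ lr)"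
    using Cons by (auto simp: dim_concat_vecs length_concat intro!: arg_cong[where f=sum_list] nth_equalityI)
  have "rs_sum (concat_vecs (x # xs) u) (concat (y # ys) @ lr) j
      = rs_sum x y j + rs_sum (concat_vecs xs u) (concat ys @ lr) j"
  proof -
    have x: "dim_vec x = length y" using Cons.prems(1)[rule_format, of 0] by simp
    show ?thesis using rs_sum_append[OF x d] by simp
  qed
  then show ?case using Cons by (simp del: sum.lessThan_Suc add: sum.lessThan_Suc_shift)
qed simp




lemma deriv_1: "is_derivation \<delta> \<Longrightarrow> \<delta> 1 = 0"
  using deriv_mult[of \<delta> 1 1] by (metis add_cancel_right_right mult_1 mult_1_right)

lemma deriv_neg1: "is_derivation \<delta> \<Longrightarrow> \<delta> (-1) = 0"
  using deriv_add[of \<delta> 1 "-1"] deriv_1[of \<delta>] deriv_0[of \<delta>] by simp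

lemma dlpow_neg1: assumes d: "is_derivation \<delta>"
  shows "(dleft \<delta> ^^ k) (-1) = Polynomial.monom (-1) k"
proof (induction k)
  case 0 then show ?case by (simp add: monom_0 one_pCons)
next
  case (Suc k) then show ?case by (simp add: dleft_monom[OF d] deriv_neg1[OF d])
qed

lemma dim_S_mat[simp]: "dim_row (S_mat \<delta> n P) = n - degree P + 1" "dim_col (S_mat \<delta> n P) = n + 1"
  by (simp_all add: S_mat_def Let_def)

lemma S_mat_index: "t < n - degree P + 1 \<Longrightarrow> p < n + 1 \<Longrightarrow>
  S_mat \<delta> n P $$ (t, p) = coeff ((dleft \<delta> ^^ (n - degree P - t)) P) (n - p)"
  by (simp add: S_mat_def Let_def dmult_monom)

lemma S_neg1_index: assumes d: "is_derivation \<delta>" and tp: "t < n + 1" "p < n + 1"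
  shows "S_mat \<delta> n (-1) $$ (t, p) = (if t = p then -1 else 0)"
proof -
  have "S_mat \<delta> n (-1) $$ (t, p) = coeff (Polynomial.monom (-1) (n - t)) (n - p)"
    using S_mat_index[of t n "-1" p \<delta>] tp by (simp add: dlpow_neg1[OF d])
  also have "\<dots> = (if t = p then -1 else 0)" using tp by (auto simp: coeff_monom)
  finally show ?thesis .
qed

definition blk :: "('a::field \<Rightarrow> 'a) \<Rightarrow> nat \<Rightarrow> 'a poly list \<Rightarrow> nat \<Rightarrow> 'a vec list" where
  "blk \<delta> n Ls i = map (\<lambda>t. vec (length Ls * (n + 1))
                    (\<lambda>b. if b div (n + 1) = i
                         then S_mat \<delta> n (Ls ! i) $$ (t, b mod (n + 1)) else 0))
                   [0..<dim_row (S_mat \<delta> n (Ls ! i))]"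

definition lastblk :: "('a::field \<Rightarrow> 'a) \<Rightarrow> nat \<Rightarrow> 'a poly list \<Rightarrow> 'a vec list" where
  "lastblk \<delta> n Ls = map (\<lambda>t. vec (length Ls * (n + 1)) (\<lambda>b. S_mat \<delta> n (-1) $$ (t, b mod (n + 1))))
              [0..<n + 1]"

lemma M_mat_alt: "M_mat \<delta> n Ls = mat_of_rows (length Ls * (n + 1))
   (concat (map (blk \<delta> n Ls) [0..<length Ls]) @ lastblk \<delta> n Ls)"
  unfolding M_mat_def Let_def blk_def[abs_def] lastblk_def by (rule refl)

lemma rs_sum_map: "rs_sum w (map f [0..<m]) j = (\<Sum>t<m. w $ t * f t $ j)"
  unfolding rs_sum_def by (rule sum.cong) (auto simp del: upt_Suc)

lemma length_blk[simp]: "length (blk \<delta> n Ls i) = n - degree (Ls ! i) + 1"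
  by (simp add: blk_def)
lemma length_lastblk[simp]: "length (lastblk \<delta> n Ls) = n + 1"
  by (simp add: lastblk_def)

lemma coeff_dmult_phi_inv:
  "coeff (dmult \<delta> (phi_inv w) L) q = (\<Sum>t<dim_vec w. w $ t * coeff ((dleft \<delta> ^^ (dim_vec w - 1 - t)) L) q)"
  by (simp add: phi_inv_def dmult_sum1 dmult_monom coeff_sum)

lemma rs_sum_blk: assumes w: "dim_vec w = n - degree (Ls!i) + 1" and j: "j < length Ls * (n+1)"
  shows "rs_sum w (blk \<delta> n Ls i) j =
     (if j div (n+1) = i then coeff (dmult \<delta> (phi_inv w) (Ls!i)) (n - j mod (n+1)) else 0)"
proof -
  let ?r = "degree (Ls!i)" and ?p = "j mod (n+1)"
  have p: "?p < n + 1" by simp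
  obtain m where m: "m = n - ?r + 1" by blast
  have "rs_sum w (blk \<delta> n Ls i) j = (\<Sum>t<m. w $ t * (if j div (n+1) = i then S_mat \<delta> n (Ls!i) $$ (t, ?p) else 0))"
    unfolding blk_def rs_sum_map using j m by (intro sum.cong) (auto simp del: upt_Suc)
  also have "\<dots> = (if j div (n+1) = i then (\<Sum>t<m. w $ t * coeff ((dleft \<delta> ^^ (m - 1 - t)) (Ls!i)) (n - ?p)) else 0)"
  proof (cases "j div (n+1) = i")
    case True
    have "w $ t * S_mat \<delta> n (Ls!i) $$ (t, ?p) = w $ t * coeff ((dleft \<delta> ^^ (m - 1 - t)) (Ls!i)) (n - ?p)"
      if "t \<in> {..<m}" for t
      using S_mat_index[of t n "Ls!i" ?p \<delta>] that p m by simp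
    then show ?thesis using True by (auto intro!: sum.cong)
  qed simp
  also have "\<dots> = (if j div (n+1) = i then coeff (dmult \<delta> (phi_inv w) (Ls!i)) (n - ?p) else 0)"
    unfolding coeff_dmult_phi_inv using w m by simp
  finally show ?thesis .
qed

lemma rs_sum_last: assumes d: "is_derivation \<delta>" and u: "dim_vec u = n + 1"
  and j: "j < length Ls * (n+1)"
  shows "rs_sum u (lastblk \<delta> n Ls) j = - u $ (j mod (n+1))"
proof -
  let ?p = "j mod (n+1)"
  have p: "?p < n + 1" by simp
  have "rs_sum u (lastblk \<delta> n Ls) j = (\<Sum>t<n + 1. u $ t * S_mat \<delta> n (-1) $$ (t, ?p))"
    unfolding lastblk_def rs_sum_map using j by (intro sum.cong) (auto simp del: upt_Suc)
  also have "\<dots> = (\<Sum>t<n + 1. if t = ?p then - u $ t else 0)"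
  proof (rule sum.cong[OF refl])
    fix t assume "t \<in> {..<n + 1}"
    then show "u $ t * S_mat \<delta> n (-1) $$ (t, ?p) = (if t = ?p then - u $ t else 0)"
      using S_neg1_index[OF d _ p, of t] by simp
  qed
  also have "\<dots> = - u $ ?p" by (simp only: sum.delta finite_lessThan) (simp add: p)
  finally show ?thesis .
qed

lemma dim_M_mat: "dim_col (M_mat \<delta> n Ls) = length Ls * (n + 1)"
  "dim_row (M_mat \<delta> n Ls) = (\<Sum>b<length Ls. n - degree (Ls ! b) + 1) + (n + 1)"
proof -
  show "dim_col (M_mat \<delta> n Ls) = length Ls * (n + 1)" unfolding M_mat_alt by simp
  have "length (concat (map (blk \<delta> n Ls) [0..<length Ls])) = (\<Sum>b<length Ls. n - degree (Ls ! b) + 1)"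
    by (simp add: length_concat sum_list_sum_nth atLeast0LessThan del: upt_Suc)
  then show "dim_row (M_mat \<delta> n Ls) = (\<Sum>b<length Ls. n - degree (Ls ! b) + 1) + (n + 1)"
    unfolding M_mat_alt by simp
qed

lemma dim_concat_us:
  assumes r: "\<forall>i<length Ls. degree (Ls!i) \<le> n"
  and lus: "length us = length Ls" and dus: "\<forall>i<length Ls. dim_vec (us!i) = n + 1 - degree (Ls!i)"
  and du: "dim_vec u = n + 1"
  shows "dim_vec (concat_vecs us u) = dim_row (M_mat \<delta> n Ls)"
proof -
  have "sum_list (map dim_vec us) = (\<Sum>b<length Ls. n - degree (Ls ! b) + 1)"
    using lus dus r by (auto simp: sum_list_sum_nth atLeast0LessThan Suc_diff_le intro!: sum.cong)
  then show ?thesis by (simp add: dim_concat_vecs dim_M_mat du)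
qed

lemma M_colsum:
  assumes d: "is_derivation \<delta>" and r: "\<forall>i<length Ls. degree (Ls!i) \<le> n"
  and lus: "length us = length Ls" and dus: "\<forall>i<length Ls. dim_vec (us!i) = n + 1 - degree (Ls!i)"
  and du: "dim_vec u = n + 1" and j: "j < length Ls * (n + 1)"
  shows "(\<Sum>i<dim_row (M_mat \<delta> n Ls). concat_vecs us u $ i * M_mat \<delta> n Ls $$ (i, j))
       = coeff (dmult \<delta> (phi_inv (us ! (j div (n+1)))) (Ls ! (j div (n+1)))) (n - j mod (n+1)) - u $ (j mod (n+1))"
proof -
  let ?k = "length Ls" and ?p = "j mod (n+1)" and ?b = "j div (n+1)"
  define rbs where "rbs = map (blk \<delta> n Ls) [0..<?k]"
  define rows where "rows = concat rbs @ lastblk \<delta> n Ls"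
  have M: "M_mat \<delta> n Ls = mat_of_rows (?k * (n+1)) rows" unfolding rows_def rbs_def by (rule M_mat_alt)
  have dr: "dim_row (M_mat \<delta> n Ls) = length rows" using M by simp
  have "(\<Sum>i<dim_row (M_mat \<delta> n Ls). concat_vecs us u $ i * M_mat \<delta> n Ls $$ (i, j)) = rs_sum (concat_vecs us u) rows j"
    unfolding rs_sum_def dr by (rule sum.cong) (use M j in \<open>auto simp: mat_of_rows_index\<close>)
  also have "\<dots> = (\<Sum>b<length us. rs_sum (us!b) (rbs!b) j) + rs_sum u (lastblk \<delta> n Ls) j"
    unfolding rows_def by (rule rs_sum_concat) (use lus dus du r in \<open>auto simp: rbs_def\<close>)
  also have "(\<Sum>b<length us. rs_sum (us!b) (rbs!b) j)
      = (\<Sum>b<?k. if ?b = b then coeff (dmult \<delta> (phi_inv (us!b)) (Ls!b)) (n - ?p) else 0)"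
  proof (rule sum.cong)
    fix b assume "b \<in> {..<?k}"
    then have b: "b < ?k" by simp
    have "dim_vec (us!b) = n - degree (Ls!b) + 1" using dus r b by (simp add: Suc_diff_le)
    then show "rs_sum (us!b) (rbs!b) j = (if ?b = b then coeff (dmult \<delta> (phi_inv (us!b)) (Ls!b)) (n - ?p) else 0)"
      using rs_sum_blk[of "us!b" n Ls b j \<delta>] b j by (simp add: rbs_def)
  qed (use lus in simp)
  also have "\<dots> = coeff (dmult \<delta> (phi_inv (us!?b)) (Ls!?b)) (n - ?p)"
  proof -
    have "?b < ?k" using j by (simp add: less_mult_imp_div_less)
    then show ?thesis by (simp only: sum.delta' finite_lessThan) simp
  qed
  also have "rs_sum u (lastblk \<delta> n Ls) j = - u $ ?p" by (rule rs_sum_last[OF d du j])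
  finally show ?thesis by simp
qed

lemma coeffs_eq_phi_inv:
  assumes du: "dim_vec u = n + 1" and D: "degree D \<le> n"
  shows "(\<forall>p<n+1. coeff D (n - p) = u $ p) \<longleftrightarrow> phi_inv u = D"
proof
  assume h: "\<forall>p<n+1. coeff D (n - p) = u $ p"
  show "phi_inv u = D"
  proof (rule poly_eqI)
    fix i show "coeff (phi_inv u) i = coeff D i"
    proof (cases "i \<le> n")
      case True
      then show ?thesis using h[rule_format, of "n - i"] du by (simp add: coeff_phi_inv)
    next
      case False
      then show ?thesis using D du by (simp add: coeff_phi_inv coeff_eq_0)
    qed
  qed
next
  assume "phi_inv u = D"
  then show "\<forall>p<n+1. coeff D (n - p) = u $ p" using du by (auto simp: coeff_phi_inv)
qed

lemma left_kernel_char: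
  assumes d: "is_derivation \<delta>" and r: "\<forall>i<length Ls. degree (Ls!i) \<le> n"
  and lus: "length us = length Ls" and dus: "\<forall>i<length Ls. dim_vec (us!i) = n + 1 - degree (Ls!i)"
  and du: "dim_vec u = n + 1"
  shows "concat_vecs us u \<in> left_kernel (M_mat \<delta> n Ls) \<longleftrightarrow>
     (\<forall>i<length Ls. phi_inv u = dmult \<delta> (phi_inv (us!i)) (Ls!i))"
proof -
  let ?k = "length Ls"
  let ?D = "\<lambda>b. dmult \<delta> (phi_inv (us!b)) (Ls!b)"
  have dimv: "dim_vec (concat_vecs us u) = dim_row (M_mat \<delta> n Ls)"
    by (rule dim_concat_us[OF r lus dus du])
  have "concat_vecs us u \<in> left_kernel (M_mat \<delta> n Ls) \<longleftrightarrow>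
    (\<forall>j<?k*(n+1). coeff (?D (j div (n+1))) (n - j mod (n+1)) = u $ (j mod (n+1)))"
    unfolding left_kernel_def using dimv M_colsum[OF d r lus dus du] by (simp add: dim_M_mat)
  also have "\<dots> \<longleftrightarrow> (\<forall>b<?k. \<forall>p<n+1. coeff (?D b) (n - p) = u $ p)"
  proof
    assume h: "\<forall>j<?k*(n+1). coeff (?D (j div (n+1))) (n - j mod (n+1)) = u $ (j mod (n+1))"
    show "\<forall>b<?k. \<forall>p<n+1. coeff (?D b) (n - p) = u $ p"
    proof (intro allI impI)
      fix b p assume b: "b < ?k" and p: "p < n + 1"
      have j: "b * (n+1) + p < ?k * (n+1)"
      proof -
        have "b * (n+1) + p < (b + 1) * (n + 1)" using p by simp
        also have "\<dots> \<le> ?k * (n+1)" using b by (intro mult_right_mono) auto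
        finally show ?thesis .
      qed
      obtain q where q: "q = n + 1" by simp
      have pq: "p < q" "0 < q" using p q by simp_all
      have "(b * q + p) div q = b" "(b * q + p) mod q = p" using pq by simp_all
      then have "(b * (n+1) + p) div (n+1) = b" "(b * (n+1) + p) mod (n+1) = p" using q by simp_all
      then show "coeff (?D b) (n - p) = u $ p" using h[rule_format, OF j] by simp
    qed
  next
    assume h: "\<forall>b<?k. \<forall>p<n+1. coeff (?D b) (n - p) = u $ p"
    show "\<forall>j<?k*(n+1). coeff (?D (j div (n+1))) (n - j mod (n+1)) = u $ (j mod (n+1))"
    proof (intro allI impI)
      fix j assume "j < ?k * (n+1)"
      then have "j div (n+1) < ?k" by (simp add: less_mult_imp_div_less)
      then show "coeff (?D (j div (n+1))) (n - j mod (n+1)) = u $ (j mod (n+1))" using h by simp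
    qed
  qed
  also have "\<dots> \<longleftrightarrow> (\<forall>b<?k. phi_inv u = ?D b)"
  proof -
    have "degree (?D b) \<le> n" if b: "b < ?k" for b
    proof -
      have "degree (?D b) \<le> degree (phi_inv (us!b)) + degree (Ls!b)"
        by (rule degree_dmult_le[of \<delta>, OF deriv_0[OF d]])
      also have "\<dots> \<le> (dim_vec (us!b) - 1) + degree (Ls!b)" using degree_phi_inv by simp
      also have "\<dots> \<le> n" using dus r b by simp
      finally show ?thesis .
    qed
    then show ?thesis using coeffs_eq_phi_inv[OF du] by blast
  qed
  finally show ?thesis .
qed




lemma leftker_iff_transpose:
  "v \<in> left_kernel M \<longleftrightarrow> v \<in> carrier_vec (dim_row M) \<and> M\<^sup>T *\<^sub>v v = 0\<^sub>v (dim_col M)"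
proof -
  have "(M\<^sup>T *\<^sub>v v = 0\<^sub>v (dim_col M)) \<longleftrightarrow> (\<forall>j<dim_col M. (\<Sum>i<dim_row M. v $ i * M $$ (i, j)) = 0)"
    if v: "dim_vec v = dim_row M"
  proof -
    have "(M\<^sup>T *\<^sub>v v) $ j = (\<Sum>i<dim_row M. v $ i * M $$ (i, j))" if j: "j < dim_col M" for j
      using j v by (simp add: scalar_prod_def atLeast0LessThan mult.commute)
    then show ?thesis by (auto simp: vec_eq_iff)
  qed
  then show ?thesis unfolding left_kernel_def carrier_vec_def by auto
qed

lemma exists_kernel_nonzero:
  fixes A :: "'a::field mat"
  assumes A: "A \<in> carrier_mat nr nc" and lt: "nr < nc"
  shows "\<exists>v \<in> carrier_vec nc. v \<noteq> 0\<^sub>v nc \<and> A *\<^sub>v v = 0\<^sub>v nr"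
proof (cases "distinct (cols A)")
  case True
  interpret V: vec_space "TYPE('a)" nr .
  have "V.lin_dep (set (cols A))"
  proof (rule ccontr)
    assume ind: "\<not> V.lin_dep (set (cols A))"
    have sub: "set (cols A) \<subseteq> carrier_vec nr" using A cols_dim by blast
    have "card (set (cols A)) \<le> nr" using V.li_le_dim(2)[OF V.fin_dim sub ind] V.dim_is_n by simp
    moreover have "card (set (cols A)) = nc" using True A by (simp add: distinct_card)
    ultimately show False using lt by simp
  qed
  then obtain v where "v \<in> carrier_vec nc" "v \<noteq> 0\<^sub>v nc" "A *\<^sub>v v = 0\<^sub>v nr"
    using V.lin_depE[OF A _ True] by blast
  then show ?thesis by blast
next
  case False
  then obtain i j where ij: "i < nc" "j < nc" "i \<noteq> j" "col A i = col A j"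
    using A by (auto simp: distinct_conv_nth)
  define y :: "'a vec" where "y = unit_vec nc i - unit_vec nc j"
  have ycar: "y \<in> carrier_vec nc" unfolding y_def by simp
  have "A *\<^sub>v y = 0\<^sub>v nr"
  proof (rule eq_vecI)
    fix l assume l: "l < dim_vec (0\<^sub>v nr)"
    have "(A *\<^sub>v y) $ l = row A l \<bullet> y" using A l by simp
    also have "\<dots> = row A l \<bullet> unit_vec nc i - row A l \<bullet> unit_vec nc j"
      unfolding y_def using A l by (intro scalar_prod_minus_distrib[of _ nc]) auto
    also have "\<dots> = A $$ (l, i) - A $$ (l, j)" using A l ij(1,2) by simp
    also have "\<dots> = col A i $ l - col A j $ l" using A l ij(1,2) by simp
    also have "\<dots> = 0" using ij by simp
    finally show "(A *\<^sub>v y) $ l = 0\<^sub>v nr $ l" using l by simp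
  qed (use A in simp)
  moreover have "y \<noteq> 0\<^sub>v nc"
  proof
    assume "y = 0\<^sub>v nc"
    then have "y $ i = 0" by (simp add: ij)
    then show False unfolding y_def using ij by simp
  qed
  ultimately show ?thesis using ycar by blast
qed

lemma kernel_u_nonzero:
  assumes d: "is_derivation \<delta>" and nz: "\<forall>i<length Ls. Ls ! i \<noteq> 0"
  and r: "\<forall>i<length Ls. degree (Ls!i) \<le> n"
  and lus: "length us = length Ls" and dus: "\<forall>i<length Ls. dim_vec (us!i) = n + 1 - degree (Ls!i)"
  and du: "dim_vec u = n + 1"
  and ker: "concat_vecs us u \<in> left_kernel (M_mat \<delta> n Ls)"
  and nzv: "concat_vecs us u \<noteq> 0\<^sub>v (dim_vec (concat_vecs us u))"
  shows "phi_inv u \<noteq> 0"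
proof
  assume u0: "phi_inv u = 0"
  have eq: "\<forall>i<length Ls. phi_inv u = dmult \<delta> (phi_inv (us!i)) (Ls!i)"
    using left_kernel_char[OF d r lus dus du] ker by blast
  have "\<forall>v\<in>set us. v = 0\<^sub>v (dim_vec v)"
  proof
    fix v assume "v \<in> set us"
    then obtain i where i: "i < length Ls" "v = us ! i" using lus by (auto simp: in_set_conv_nth)
    then have "dmult \<delta> (phi_inv v) (Ls!i) = 0" using eq u0 by simp
    then have "phi_inv v = 0" using dmult_eq_0_iff[of \<delta>, OF deriv_0[OF d]] nz i by blast
    then show "v = 0\<^sub>v (dim_vec v)" by (rule phi_inv_eq_0)
  qed
  moreover have "u = 0\<^sub>v (dim_vec u)" using u0 by (rule phi_inv_eq_0)
  ultimately show False using concat_vecs_zero nzv by blast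
qed

lemma sum_list_map_upt: "sum_list (map f [0..<k]) = (\<Sum>b<k. f b)"
  by (simp add: sum_list_sum_nth atLeast0LessThan del: upt_Suc)

lemma sum_sub_add: "(\<forall>b<k. f b \<le> (n::nat)) \<Longrightarrow> (\<Sum>b<k. n - f b + 1) + (\<Sum>b<k. f b) = k * (n + 1)"
proof -
  assume h: "\<forall>b<k. f b \<le> n"
  have "(\<Sum>b<k. n - f b + 1) + (\<Sum>b<k. f b) = (\<Sum>b<k. n - f b + 1 + f b)"
    by (rule sum.distrib[symmetric])
  also have "\<dots> = (\<Sum>b<k. n + 1)" using h by (intro sum.cong) auto
  finally show ?thesis by simp
qed

lemma exists_clm:
  assumes d: "is_derivation \<delta>" and nz: "\<forall>i<length Ls. Ls ! i \<noteq> 0"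
  shows "\<exists>L. L \<noteq> 0 \<and> common_left_multiple \<delta> Ls L"
proof -
  let ?k = "length Ls"
  define n where "n = (\<Sum>i<?k. degree (Ls!i))"
  have r: "\<forall>i<?k. degree (Ls!i) \<le> n"
    unfolding n_def by (auto intro: member_le_sum)
  let ?M = "M_mat \<delta> n Ls"
  define NN where "NN = dim_row ?M"
  have NN: "NN = (\<Sum>b<?k. n - degree (Ls ! b) + 1) + (n + 1)" unfolding NN_def by (rule dim_M_mat)
  have s0: "(\<Sum>b<?k. n - degree (Ls ! b) + 1) + (\<Sum>b<?k. degree (Ls ! b)) = ?k * (n + 1)"
    by (rule sum_sub_add) (use r in auto)
  have s1: "(\<Sum>b<?k. n - degree (Ls ! b) + 1) + n = ?k * (n + 1)"
    using s0 by (simp only: n_def[symmetric])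
  have lt: "?k * (n + 1) < NN" using NN s1 by linarith
  have Mt: "?M\<^sup>T \<in> carrier_mat (?k * (n + 1)) NN" unfolding NN_def by (simp add: dim_M_mat carrier_matI)
  obtain v where v: "v \<in> carrier_vec NN" "v \<noteq> 0\<^sub>v NN" "?M\<^sup>T *\<^sub>v v = 0\<^sub>v (?k * (n + 1))"
    using exists_kernel_nonzero[OF Mt lt] by blast
  have vker: "v \<in> left_kernel ?M" using v unfolding leftker_iff_transpose NN_def by (simp add: dim_M_mat)
  have "v \<in> carrier_vec (sum_list (map (\<lambda>b. n + 1 - degree (Ls!b)) [0..<?k]) + (n + 1))"
    using v(1) NN r by (simp add: sum_list_map_upt Suc_diff_le)
  then obtain us u where su: "length us = length (map (\<lambda>b. n + 1 - degree (Ls!b)) [0..<?k])"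
    "\<forall>b<length (map (\<lambda>b. n + 1 - degree (Ls!b)) [0..<?k]). dim_vec (us!b) = map (\<lambda>b. n + 1 - degree (Ls!b)) [0..<?k] ! b"
    "dim_vec u = n + 1" "v = concat_vecs us u"
    using concat_vecs_split by blast
  have lus: "length us = ?k" using su(1) by simp
  have dus: "\<forall>i<?k. dim_vec (us!i) = n + 1 - degree (Ls!i)" using su(2) by simp
  have nzv: "concat_vecs us u \<noteq> 0\<^sub>v (dim_vec (concat_vecs us u))" using v su(4) by auto
  have "phi_inv u \<noteq> 0" using kernel_u_nonzero[OF d nz r lus dus su(3)] vker su(4) nzv by blast
  moreover have "common_left_multiple \<delta> Ls (phi_inv u)"
    using left_kernel_char[OF d r lus dus su(3)] vker su(4)
    unfolding common_left_multiple_def by blast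
  ultimately show ?thesis by blast
qed




lemma clm_div:
  assumes d: "is_derivation \<delta>" and Lm: "Lm \<noteq> 0" "common_left_multiple \<delta> Ls Lm"
  and minimal: "\<And>L. L \<noteq> 0 \<Longrightarrow> common_left_multiple \<delta> Ls L \<Longrightarrow> degree Lm \<le> degree L"
  shows "common_left_multiple \<delta> Ls L \<Longrightarrow> \<exists>R. L = dmult \<delta> R Lm"
proof (induction "degree L" arbitrary: L rule: less_induct)
  case less
  have d0: "\<delta> 0 = 0" using deriv_0[OF d] .
  show ?case
  proof (cases "L = 0")
    case True then show ?thesis by (intro exI[of _ 0]) simp
  next
    case False
    let ?e = "degree L" and ?dm = "degree Lm"
    have le: "?dm \<le> ?e" using minimal[OF False less.prems] .
    define c where "c = lead_coeff L / lead_coeff Lm"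
    have c0: "c \<noteq> 0" using False Lm by (simp add: c_def)
    define T where "T = dmult \<delta> (Polynomial.monom c (?e - ?dm)) Lm"
    have mon0: "Polynomial.monom c (?e - ?dm) \<noteq> 0" using c0 by simp
    have Td: "degree T = degree (Polynomial.monom c (?e - ?dm)) + ?dm"
      "lead_coeff T = lead_coeff (Polynomial.monom c (?e - ?dm)) * lead_coeff Lm"
      using degree_dmult[of \<delta>, OF d0 mon0 Lm(1)] unfolding T_def by auto
    have Tdeg: "degree T = ?e" using Td(1) le c0 by (simp add: degree_monom_eq)
    have Tlc: "coeff T ?e = lead_coeff L"
      using Td(2) Tdeg c0 Lm(1) by (simp add: degree_monom_eq c_def)
    define L' where "L' = L - T"
    have clm': "common_left_multiple \<delta> Ls L'"
      unfolding common_left_multiple_def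
    proof (intro allI impI)
      fix i assume i: "i < length Ls"
      obtain Q where Q: "L = dmult \<delta> Q (Ls!i)" using less.prems i unfolding common_left_multiple_def by blast
      obtain P where P: "Lm = dmult \<delta> P (Ls!i)" using Lm(2) i unfolding common_left_multiple_def by blast
      have "T = dmult \<delta> (dmult \<delta> (Polynomial.monom c (?e - ?dm)) P) (Ls!i)"
        unfolding T_def by (subst P) (rule dmult_assoc[OF d])
      then have "L' = dmult \<delta> (Q - dmult \<delta> (Polynomial.monom c (?e - ?dm)) P) (Ls!i)"
        unfolding L'_def using Q by (simp add: dmult_diff1)
      then show "\<exists>Q. L' = dmult \<delta> Q (Ls!i)" by blast
    qed
    show ?thesis
    proof (cases "L' = 0")
      case True then have "L = T" by (simp add: L'_def)
      then show ?thesis unfolding T_def by blast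
    next
      case False
      have "degree L' \<le> ?e" unfolding L'_def using Tdeg by (metis degree_diff_le le_refl)
      moreover have "coeff L' ?e = 0" unfolding L'_def using Tlc by simp
      ultimately have "degree L' < ?e" using False by (metis le_neq_implies_less leading_coeff_0_iff)
      then obtain R' where R': "L' = dmult \<delta> R' Lm" using less.hyps clm' by blast
      have "L = L' + T" by (simp add: L'_def)
      also have "\<dots> = dmult \<delta> (R' + Polynomial.monom c (?e - ?dm)) Lm"
        unfolding R' T_def by (simp add: dmult_add1)
      finally show ?thesis by blast
    qed
  qed
qed

theorem theorem3:
  fixes \<delta> :: "'a::field \<Rightarrow> 'a" and Ls :: "'a poly list" and n :: nat
  assumes deriv: "is_derivation \<delta>"
    and nonempty: "Ls \<noteq> []"
    and nonzero: "\<forall>i<length Ls. Ls ! i \<noteq> 0"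
    and n_ge: "n \<ge> ord_lclm \<delta> Ls"
  shows
    "(\<forall>L Qs. common_left_multiple \<delta> Ls L \<and> degree L \<le> n \<and> length Qs = length Ls \<and>
        (\<forall>i<length Ls. L = dmult \<delta> (Qs ! i) (Ls ! i)) \<longrightarrow>
        concat_vecs (map (\<lambda>i. phi (n - degree (Ls ! i)) (Qs ! i)) [0..<length Ls]) (phi n L)
          \<in> left_kernel (M_mat \<delta> n Ls))
   \<and> (\<forall>us u. length us = length Ls \<and>
        (\<forall>i<length Ls. dim_vec (us ! i) = n + 1 - degree (Ls ! i)) \<and> dim_vec u = n + 1 \<and>
        concat_vecs us u \<noteq> 0\<^sub>v (dim_vec (concat_vecs us u)) \<and>
        concat_vecs us u \<in> left_kernel (M_mat \<delta> n Ls) \<longrightarrow>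
        u \<noteq> 0\<^sub>v (n + 1) \<and>
        common_left_multiple \<delta> Ls (phi_inv u) \<and>
        (\<forall>i<length Ls. phi_inv u = dmult \<delta> (phi_inv (us ! i)) (Ls ! i)))
   \<and> int (ord_lclm \<delta> Ls) = int (mat_rank (M_mat \<delta> n Ls)) + int (\<Sum>i<length Ls. degree (Ls ! i))
        - int (length Ls) * int (n + 1)"
proof -
  let ?k = "length Ls"
  have d0: "\<delta> 0 = 0" using deriv_0[OF deriv] .
  define Pclm where "Pclm = (\<lambda>m. \<exists>L. L \<noteq> 0 \<and> degree L = m \<and> common_left_multiple \<delta> Ls L)"
  define dd where "dd = ord_lclm \<delta> Ls"
  have ordd: "dd = Least Pclm" unfolding dd_def ord_lclm_def Pclm_def ..
  obtain L0 where L0: "L0 \<noteq> 0" "common_left_multiple \<delta> Ls L0" using exists_clm[OF deriv nonzero] by blast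
  have "Pclm (degree L0)" using L0 unfolding Pclm_def by blast
  then have "Pclm (Least Pclm)" by (rule LeastI)
  then obtain Lm where Lm: "Lm \<noteq> 0" "degree Lm = dd" "common_left_multiple \<delta> Ls Lm"
    unfolding Pclm_def ordd by blast
  have minimal: "degree Lm \<le> degree L" if "L \<noteq> 0" "common_left_multiple \<delta> Ls L" for L
  proof -
    have "Pclm (degree L)" using that unfolding Pclm_def by blast
    then show ?thesis using Lm(2) ordd by (simp add: Least_le)
  qed
  obtain P where P: "\<And>i. i < ?k \<Longrightarrow> Lm = dmult \<delta> (P i) (Ls!i)"
    using Lm(3) unfolding common_left_multiple_def by metis
  have Pnz: "P i \<noteq> 0" if "i < ?k" for i using P[OF that] Lm(1) by auto
  have degP: "degree (P i) + degree (Ls!i) = dd" if i: "i < ?k" for i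
    using degree_dmult[of \<delta>, OF d0 Pnz[OF i], of "Ls!i"] nonzero i P[OF i] Lm(2) by simp
  have ddn: "dd \<le> n" using n_ge dd_def by simp
  have r: "\<forall>i<?k. degree (Ls!i) \<le> n" using degP ddn by fastforce

  have part1: "\<forall>L Qs. common_left_multiple \<delta> Ls L \<and> degree L \<le> n \<and> length Qs = length Ls \<and>
        (\<forall>i<length Ls. L = dmult \<delta> (Qs ! i) (Ls ! i)) \<longrightarrow>
        concat_vecs (map (\<lambda>i. phi (n - degree (Ls ! i)) (Qs ! i)) [0..<length Ls]) (phi n L)
          \<in> left_kernel (M_mat \<delta> n Ls)"
  proof (intro allI impI)
    fix L Qs assume h: "common_left_multiple \<delta> Ls L \<and> degree L \<le> n \<and> length Qs = ?k \<and>
        (\<forall>i<?k. L = dmult \<delta> (Qs ! i) (Ls ! i))"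
    define us where "us = map (\<lambda>i. phi (n - degree (Ls!i)) (Qs!i)) [0..<?k]"
    have lus: "length us = ?k" by (simp add: us_def)
    have dus: "\<forall>i<?k. dim_vec (us!i) = n + 1 - degree (Ls!i)" using r by (simp add: us_def Suc_diff_le)
    have du: "dim_vec (phi n L) = n + 1" by simp
    have degQ: "degree (Qs!i) \<le> n - degree (Ls!i)" if i: "i < ?k" for i
    proof (cases "Qs!i = 0")
      case True then show ?thesis by simp
    next
      case False
      have hL: "L = dmult \<delta> (Qs!i) (Ls!i)" "degree L \<le> n" using h i by auto
      have "degree L = degree (Qs!i) + degree (Ls!i)"
        using hL(1) i degree_dmult[of \<delta>, OF d0 False, of "Ls!i"] nonzero by simp
      then show ?thesis using hL(2) by linarith
    qed
    have pL: "phi_inv (phi n L) = L" using h by (intro phi_inv_phi) blast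
    have "\<forall>i<?k. phi_inv (phi n L) = dmult \<delta> (phi_inv (us!i)) (Ls!i)"
    proof (intro allI impI)
      fix i assume i: "i < ?k"
      have "phi_inv (us!i) = Qs!i" using degQ[OF i] i by (simp add: us_def phi_inv_phi)
      moreover have "L = dmult \<delta> (Qs!i) (Ls!i)" using h i by blast
      ultimately show "phi_inv (phi n L) = dmult \<delta> (phi_inv (us!i)) (Ls!i)" using pL by simp
    qed
    then show "concat_vecs (map (\<lambda>i. phi (n - degree (Ls ! i)) (Qs ! i)) [0..<length Ls]) (phi n L)
          \<in> left_kernel (M_mat \<delta> n Ls)"
      using left_kernel_char[OF deriv r lus dus du] unfolding us_def by blast
  qed

  have part2: "\<forall>us u. length us = length Ls \<and>
        (\<forall>i<length Ls. dim_vec (us ! i) = n + 1 - degree (Ls ! i)) \<and> dim_vec u = n + 1 \<and>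
        concat_vecs us u \<noteq> 0\<^sub>v (dim_vec (concat_vecs us u)) \<and>
        concat_vecs us u \<in> left_kernel (M_mat \<delta> n Ls) \<longrightarrow>
        u \<noteq> 0\<^sub>v (n + 1) \<and>
        common_left_multiple \<delta> Ls (phi_inv u) \<and>
        (\<forall>i<length Ls. phi_inv u = dmult \<delta> (phi_inv (us ! i)) (Ls ! i))"
  proof (intro allI impI)
    fix us u assume h: "length us = ?k \<and> (\<forall>i<?k. dim_vec (us!i) = n + 1 - degree (Ls!i)) \<and>
      dim_vec u = n + 1 \<and> concat_vecs us u \<noteq> 0\<^sub>v (dim_vec (concat_vecs us u)) \<and>
      concat_vecs us u \<in> left_kernel (M_mat \<delta> n Ls)"
    then have eqs: "\<forall>i<?k. phi_inv u = dmult \<delta> (phi_inv (us!i)) (Ls!i)"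
      using left_kernel_char[OF deriv r] by blast
    have "phi_inv u \<noteq> 0" using kernel_u_nonzero[OF deriv nonzero r] h by blast
    then have "u \<noteq> 0\<^sub>v (n + 1)" by auto
    moreover have "common_left_multiple \<delta> Ls (phi_inv u)" using eqs unfolding common_left_multiple_def by blast
    ultimately show "u \<noteq> 0\<^sub>v (n + 1) \<and> common_left_multiple \<delta> Ls (phi_inv u) \<and>
        (\<forall>i<?k. phi_inv u = dmult \<delta> (phi_inv (us ! i)) (Ls ! i))" using eqs by blast
  qed

  let ?M = "M_mat \<delta> n Ls"
  define NN where "NN = dim_row ?M"
  define s where "s = n - dd + 1"
  define Psi where "Psi = (\<lambda>R. concat_vecs (map (\<lambda>b. phi (n - degree (Ls!b)) (dmult \<delta> R (P b))) [0..<?k])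
                              (phi n (dmult \<delta> R Lm)))"
  have dimPsi: "dim_vec (Psi R) = NN" for R
    using dim_concat_us[OF r, of "map (\<lambda>b. phi (n - degree (Ls!b)) (dmult \<delta> R (P b))) [0..<?k]"
        "phi n (dmult \<delta> R Lm)" \<delta>] r
    by (simp add: Psi_def NN_def Suc_diff_le)
  have Psiker: "Psi R \<in> left_kernel ?M" if R: "degree R \<le> n - dd" for R
  proof -
    have degDL: "degree (dmult \<delta> R Lm) \<le> n"
      using degree_dmult_le[of \<delta> R Lm, OF d0] R Lm(2) ddn by simp
    have degDP: "degree (dmult \<delta> R (P b)) \<le> n - degree (Ls!b)" if b: "b < ?k" for b
      using degree_dmult_le[of \<delta> R "P b", OF d0] R degP[OF b] ddn by simp
    have "\<forall>b<?k. phi_inv (phi n (dmult \<delta> R Lm)) =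
        dmult \<delta> (phi_inv (map (\<lambda>b. phi (n - degree (Ls!b)) (dmult \<delta> R (P b))) [0..<?k] ! b)) (Ls!b)"
    proof (intro allI impI)
      fix b assume b: "b < ?k"
      have "dmult \<delta> (dmult \<delta> R (P b)) (Ls!b) = dmult \<delta> R Lm"
        using dmult_assoc[OF deriv, of R "P b" "Ls!b"] P[OF b] by simp
      then show "phi_inv (phi n (dmult \<delta> R Lm)) =
        dmult \<delta> (phi_inv (map (\<lambda>b. phi (n - degree (Ls!b)) (dmult \<delta> R (P b))) [0..<?k] ! b)) (Ls!b)"
        using b degDL degDP[OF b] by (simp add: phi_inv_phi)
    qed
    then show ?thesis unfolding Psi_def
      using left_kernel_char[OF deriv r, of "map (\<lambda>b. phi (n - degree (Ls!b)) (dmult \<delta> R (P b))) [0..<?k]"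
         "phi n (dmult \<delta> R Lm)"] r by (simp add: Suc_diff_le)
  qed
  have Psiadd: "Psi (R1 + R2) = Psi R1 + Psi R2" for R1 R2
    unfolding Psi_def by (subst concat_vecs_add) (auto simp: dmult_add1 phi_add)
  have Psismult: "Psi (Polynomial.smult c R) = c \<cdot>\<^sub>v Psi R" for c R
    unfolding Psi_def by (simp add: concat_vecs_smult dmult_smult1 phi_smult o_def)
  have Psi0: "Psi 0 $ i = 0" if "i < NN" for i
  proof -
    have "Psi 0 = 0\<^sub>v (dim_vec (Psi 0))" unfolding Psi_def by (rule concat_vecs_zero) auto
    then show ?thesis using that dimPsi by (metis index_zero_vec(1))
  qed
  have Psisum: "Psi (\<Sum>j\<in>J. Polynomial.smult (y j) (E j)) $ i = (\<Sum>j\<in>J. y j * Psi (E j) $ i)"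
    if "finite J" "i < NN" for J y E i
    using that
  proof (induction J rule: finite_induct)
    case empty then show ?case using Psi0 by simp
  next
    case (insert x F)
    then show ?case using dimPsi by (simp add: Psiadd Psismult)
  qed
  define X where "X = mat NN s (\<lambda>(i, j). Psi (Polynomial.monom 1 j) $ i)"
  define Ry where "Ry = (\<lambda>y::'a vec. \<Sum>j<s. Polynomial.smult (y $ j) (Polynomial.monom 1 j))"
  have coeffRy: "coeff (Ry y) j = (if j < s then y $ j else 0)" for y j
  proof -
    have "coeff (Ry y) j = (\<Sum>l<s. if l = j then y $ l else 0)"
      unfolding Ry_def coeff_sum coeff_smult coeff_monom by (intro sum.cong) auto
    also have "\<dots> = (if j < s then y $ j else 0)" by (simp only: sum.delta finite_lessThan) simp
    finally show ?thesis .
  qed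
  have degRy: "degree (Ry y) \<le> n - dd" for y
    by (rule degree_le) (auto simp: coeffRy s_def)
  have XRy: "X *\<^sub>v y = Psi (Ry y)" if y: "y \<in> carrier_vec s" for y
  proof (rule eq_vecI)
    show "dim_vec (X *\<^sub>v y) = dim_vec (Psi (Ry y))" by (simp add: X_def dimPsi)
    fix i assume "i < dim_vec (Psi (Ry y))"
    then have i: "i < NN" by (simp add: dimPsi)
    have "(X *\<^sub>v y) $ i = (\<Sum>j<s. Psi (Polynomial.monom 1 j) $ i * y $ j)"
      using i y by (simp add: X_def scalar_prod_def atLeast0LessThan)
    also have "\<dots> = Psi (Ry y) $ i"
      unfolding Ry_def by (subst Psisum) (auto simp: i mult.commute)
    finally show "(X *\<^sub>v y) $ i = Psi (Ry y) $ i" .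
  qed
  have Mcar: "?M \<in> carrier_mat NN (?k * (n + 1))" by (simp add: NN_def dim_M_mat carrier_matI)
  have Xcar: "X \<in> carrier_mat NN s" by (simp add: X_def)
  have Xinj: "y = 0\<^sub>v s" if y: "y \<in> carrier_vec s" and Xy: "X *\<^sub>v y = 0\<^sub>v NN" for y
  proof -
    have "Psi (Ry y) = 0\<^sub>v NN" using XRy[OF y] Xy by simp
    then have "phi n (dmult \<delta> (Ry y) Lm) = 0\<^sub>v (dim_vec (phi n (dmult \<delta> (Ry y) Lm)))"
      unfolding Psi_def by (rule concat_vecs_zero_last)
    moreover have "degree (dmult \<delta> (Ry y) Lm) \<le> n"
      using degree_dmult_le[of \<delta> "Ry y" Lm, OF d0] degRy[of y] Lm(2) ddn by simp
    ultimately have "dmult \<delta> (Ry y) Lm = 0" using phi_eq_0 by simp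
    then have "Ry y = 0" using dmult_eq_0_iff[of \<delta>, OF d0] Lm(1) by blast
    then have "\<forall>j<s. y $ j = 0" using coeffRy by (metis coeff_0)
    then show ?thesis using y by (intro eq_vecI) auto
  qed
  have ker: "(?M\<^sup>T *\<^sub>v v = 0\<^sub>v (?k * (n + 1))) = (\<exists>y\<in>carrier_vec s. v = X *\<^sub>v y)"
    if v: "v \<in> carrier_vec NN" for v
  proof
    assume "\<exists>y\<in>carrier_vec s. v = X *\<^sub>v y"
    then obtain y where "y \<in> carrier_vec s" "v = X *\<^sub>v y" by blast
    then have "v \<in> left_kernel ?M" using XRy Psiker degRy by simp
    then show "?M\<^sup>T *\<^sub>v v = 0\<^sub>v (?k * (n + 1))" unfolding leftker_iff_transpose by (simp add: dim_M_mat)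
  next
    assume "?M\<^sup>T *\<^sub>v v = 0\<^sub>v (?k * (n + 1))"
    then have vker: "v \<in> left_kernel ?M" using v unfolding leftker_iff_transpose NN_def by (simp add: dim_M_mat)
    have "v \<in> carrier_vec (sum_list (map (\<lambda>b. n + 1 - degree (Ls!b)) [0..<?k]) + (n + 1))"
      using v r unfolding NN_def dim_M_mat by (simp add: sum_list_map_upt Suc_diff_le)
    then obtain us u where su: "length us = length (map (\<lambda>b. n + 1 - degree (Ls!b)) [0..<?k])"
      "\<forall>b<length (map (\<lambda>b. n + 1 - degree (Ls!b)) [0..<?k]). dim_vec (us!b) = map (\<lambda>b. n + 1 - degree (Ls!b)) [0..<?k] ! b"
      "dim_vec u = n + 1" "v = concat_vecs us u"
      using concat_vecs_split by blast
    have lus: "length us = ?k" using su(1) by simp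
    have dus: "\<forall>i<?k. dim_vec (us!i) = n + 1 - degree (Ls!i)" using su(2) by simp
    have eqs: "\<forall>i<?k. phi_inv u = dmult \<delta> (phi_inv (us!i)) (Ls!i)"
      using left_kernel_char[OF deriv r lus dus su(3)] vker su(4) by blast
    have clmL: "common_left_multiple \<delta> Ls (phi_inv u)" using eqs unfolding common_left_multiple_def by blast
    obtain R where R: "phi_inv u = dmult \<delta> R Lm" using clm_div[OF deriv Lm(1) Lm(3) minimal clmL] by blast
    have degR: "degree R \<le> n - dd"
    proof (cases "R = 0")
      case False
      have "degree (phi_inv u) = degree R + dd" using R degree_dmult[of \<delta>, OF d0 False Lm(1)] Lm(2) by simp
      moreover have "degree (phi_inv u) \<le> n" using degree_phi_inv[of u] su(3) by simp
      ultimately show ?thesis by simp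
    qed simp
    have usb: "us!b = phi (n - degree (Ls!b)) (dmult \<delta> R (P b))" if b: "b < ?k" for b
    proof -
      have "dmult \<delta> (phi_inv (us!b)) (Ls!b) = dmult \<delta> (dmult \<delta> R (P b)) (Ls!b)"
        using eqs b R P[OF b] dmult_assoc[OF deriv, of R "P b" "Ls!b"] by simp
      then have "phi_inv (us!b) = dmult \<delta> R (P b)" using dmult_cancel[of \<delta>, OF d0] nonzero b by blast
      moreover have "us!b = phi (n - degree (Ls!b)) (phi_inv (us!b))"
        using phi_phi_inv[of "us!b" "n - degree (Ls!b)"] dus b r by (simp add: Suc_diff_le)
      ultimately show ?thesis by simp
    qed
    have uu: "u = phi n (dmult \<delta> R Lm)" using R phi_phi_inv[of u n] su(3) by simp
    have "us = map (\<lambda>b. phi (n - degree (Ls!b)) (dmult \<delta> R (P b))) [0..<?k]"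
      using usb lus by (intro nth_equalityI) auto
    then have vPsi: "v = Psi R" unfolding Psi_def using su(4) uu by simp
    define y where "y = vec s (\<lambda>j. coeff R j)"
    have ycar: "y \<in> carrier_vec s" by (simp add: y_def)
    have "Ry y = R"
    proof (rule poly_eqI)
      fix j show "coeff (Ry y) j = coeff R j"
        using degR by (auto simp: coeffRy y_def s_def coeff_eq_0)
    qed
    then have "v = X *\<^sub>v y" using XRy[OF ycar] vPsi by simp
    then show "\<exists>y\<in>carrier_vec s. v = X *\<^sub>v y" using ycar by blast
  qed
  have rk: "vec_space.rank NN ?M + s = NN"
    by (rule rank_plus_leftker[OF Mcar Xcar]) (use Xinj ker in auto)
  have NNeq: "NN = (\<Sum>b<?k. n - degree (Ls ! b) + 1) + (n + 1)" unfolding NN_def by (rule dim_M_mat)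
  have s0: "(\<Sum>b<?k. n - degree (Ls ! b) + 1) + (\<Sum>b<?k. degree (Ls ! b)) = ?k * (n + 1)"
    by (rule sum_sub_add) (use r in auto)
  have mr: "mat_rank ?M = vec_space.rank NN ?M" unfolding mat_rank_def NN_def ..
  have e: "mat_rank ?M + (\<Sum>b<?k. degree (Ls ! b)) = ?k * (n + 1) + dd"
    using rk NNeq s0 mr ddn unfolding s_def by linarith
  have part3: "int (ord_lclm \<delta> Ls) = int (mat_rank ?M) + int (\<Sum>i<?k. degree (Ls ! i)) - int ?k * int (n + 1)"
  proof -
    have "int (mat_rank ?M) + int (\<Sum>b<?k. degree (Ls ! b)) = int ?k * int (n + 1) + int dd"
      using arg_cong[OF e, of int] by (simp add: algebra_simps)
    then show ?thesis unfolding dd_def by simp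
  qed
  show ?thesis using part1 part2 part3 by blast
qed


end
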